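(* Let $(V,g)$ be a four-dimensional Lorentzian vector space, $F\in\mathrm{Skew}(V)$, and $\sigma,\tau\in\mathbb{R}$. Let $\{\ell,k,e_2,e_3\}$ be a semi-null basis of $V$ such that $$F(k)=-2e_2,\qquad F(e_2)=-\ell+\tfrac{\sigma}{4}k,\qquad \langle F(\ell),F(\ell)\rangle=\tfrac{\sigma^2+\tau^2}{4}.$$ Then either the semi-null basis $\{\ell,k,e_2,e_3\}$ or the semi-null basis $\{\ell,k,e_2,-e_3\}$ (call it $\{\ell,k,e_2,e_3'\}$) satisfies $$F(\ell)=\tfrac{\sigma}{2}e_2+\tfrac{\tau}{2}e_3',\quad F(k)=-2e_2,\quad F(e_2)=-\ell+\tfrac{\sigma}{4}k,\quad F(e_3')=\tfrac{\tau}{4}k,$$ and both do whenever $\tau=0$.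
   Context: $\mathrm{Skew}(V)$ denotes the endomorphisms $F$ with $\langle e,F(e')\rangle=-\langle F(e),e'\rangle$ for all $e,e'$. A semi-null basis $\{\ell,k,e_2,e_3\}$ is a basis with $\ell,k$ null, $\langle \ell,k\rangle=-2$, $e_2,e_3$ unit spacelike, and all other inner products between distinct basis elements equal to zero. *)

theory Defs
  imports "HOL-Analysis.Analysis"
begin

definition sym_bilinear :: "('v::real_vector \<Rightarrow> 'v \<Rightarrow> real) \<Rightarrow> bool" where
  "sym_bilinear g \<longleftrightarrow> (\<forall>x y. g x y = g y x) \<and> (\<forall>y. linear (\<lambda>x. g x y))"

definition is_basis4 :: "'v::real_vector \<Rightarrow> 'v \<Rightarrow> 'v \<Rightarrow> 'v \<Rightarrow> bool" where
  "is_basis4 a b c d \<longleftrightarrow> card {a, b, c, d} = 4 \<and> independent {a, b, c, d}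
     \<and> span {a, b, c, d} = UNIV"

definition lorentzian4 :: "('v::real_vector \<Rightarrow> 'v \<Rightarrow> real) \<Rightarrow> bool" where
  "lorentzian4 g \<longleftrightarrow> sym_bilinear g \<and>
     (\<exists>e0 e1 e2 e3. is_basis4 e0 e1 e2 e3 \<and>
        g e0 e0 = -1 \<and> g e1 e1 = 1 \<and> g e2 e2 = 1 \<and> g e3 e3 = 1 \<and>
        g e0 e1 = 0 \<and> g e0 e2 = 0 \<and> g e0 e3 = 0 \<and>
        g e1 e2 = 0 \<and> g e1 e3 = 0 \<and> g e2 e3 = 0)"

definition skew :: "('v::real_vector \<Rightarrow> 'v \<Rightarrow> real) \<Rightarrow> ('v \<Rightarrow> 'v) \<Rightarrow> bool" where
  "skew g F \<longleftrightarrow> linear F \<and> (\<forall>e e'. g e (F e') = - g (F e) e')"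

definition semi_null_basis ::
  "('v::real_vector \<Rightarrow> 'v \<Rightarrow> real) \<Rightarrow> 'v \<Rightarrow> 'v \<Rightarrow> 'v \<Rightarrow> 'v \<Rightarrow> bool" where
  "semi_null_basis g l k e2 e3 \<longleftrightarrow> is_basis4 l k e2 e3 \<and>
     g l l = 0 \<and> g k k = 0 \<and> g l k = -2 \<and> g e2 e2 = 1 \<and> g e3 e3 = 1 \<and>
     g l e2 = 0 \<and> g l e3 = 0 \<and> g k e2 = 0 \<and> g k e3 = 0 \<and> g e2 e3 = 0"

definition normal_form ::
  "('v::real_vector \<Rightarrow> 'v \<Rightarrow> real) \<Rightarrow> ('v \<Rightarrow> 'v) \<Rightarrow> real \<Rightarrow> real \<Rightarrow> 'v \<Rightarrow> 'v \<Rightarrow> 'v \<Rightarrow> 'v \<Rightarrow> bool" where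
  "normal_form g F \<sigma> \<tau> l k e2 e3 \<longleftrightarrow> semi_null_basis g l k e2 e3 \<and>
     F l = (\<sigma>/2) *\<^sub>R e2 + (\<tau>/2) *\<^sub>R e3 \<and>
     F k = (-2) *\<^sub>R e2 \<and>
     F e2 = - l + (\<sigma>/4) *\<^sub>R k \<and>
     F e3 = (\<tau>/4) *\<^sub>R k"

end

theory Submission
  imports Defs
begin

lemma bil:
  assumes "sym_bilinear g"
  shows "g (x + y) z = g x z + g y z" "g z (x + y) = g z x + g z y"
    "g (c *\<^sub>R x) z = c * g x z" "g z (c *\<^sub>R x) = c * g z x"
    "g (- x) z = - g x z" "g z (- x) = - g z x"
    "g 0 z = 0" "g z 0 = 0" "g (x - y) z = g x z - g y z" "g z (x - y) = g z x - g z y"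
proof -
  have s: "\<And>x y. g x y = g y x" and l: "\<And>y. linear (\<lambda>x. g x y)"
    using assms unfolding sym_bilinear_def by auto
  have a: "\<And>x y z. g (x + y) z = g x z + g y z" using linear_add[OF l] by blast
  have b: "\<And>c x z. g (c *\<^sub>R x) z = c * g x z" using linear_cmul[OF l] by simp
  have n: "\<And>x z. g (- x) z = - g x z" using linear_neg[OF l] by blast
  have o: "\<And>z. g 0 z = 0" using linear_0[OF l] by blast
  have d: "\<And>x y z. g (x - y) z = g x z - g y z" using linear_diff[OF l] by blast
  show "g (x + y) z = g x z + g y z" "g (c *\<^sub>R x) z = c * g x z" "g (- x) z = - g x z"
    "g 0 z = 0" "g (x - y) z = g x z - g y z" using a b n o d by blast+
  show "g z (x + y) = g z x + g z y" using a[of x y z] s[of z "x + y"] s[of x z] s[of y z] by linarith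
  show "g z (c *\<^sub>R x) = c * g z x" using b[of c x z] s[of z "c *\<^sub>R x"] s[of x z] by simp
  show "g z (- x) = - g z x" using n[of x z] s[of z "- x"] s[of x z] by linarith
  show "g z 0 = 0" using o[of z] s[of z 0] by linarith
  show "g z (x - y) = g z x - g z y" using d[of x y z] s[of z "x - y"] s[of x z] s[of y z] by linarith
qed

lemma coords:
  assumes "span {a, b, c, d} = UNIV"
  shows "\<exists>p q r s. v = p *\<^sub>R a + q *\<^sub>R b + r *\<^sub>R c + s *\<^sub>R d"
proof -
  have "v \<in> span {a, b, c, d}" using assms by simp
  then obtain p where "v - p *\<^sub>R a \<in> span {b, c, d}" by (auto simp: span_insert)
  then obtain q where "v - p *\<^sub>R a - q *\<^sub>R b \<in> span {c, d}" by (auto simp: span_insert)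
  then obtain r where "v - p *\<^sub>R a - q *\<^sub>R b - r *\<^sub>R c \<in> span {d}" by (auto simp: span_insert)
  then obtain s where "v - p *\<^sub>R a - q *\<^sub>R b - r *\<^sub>R c = s *\<^sub>R d" by (auto simp: span_singleton)
  then have "v = p *\<^sub>R a + q *\<^sub>R b + r *\<^sub>R c + s *\<^sub>R d" by (simp add: algebra_simps)
  then show ?thesis by blast
qed

lemma flip_basis:
  assumes S: "sym_bilinear g" and sn: "semi_null_basis g l k e2 e3"
  shows "semi_null_basis g l k e2 (- e3)"
proof -
  define f where "f v = v - (2 * g v e3) *\<^sub>R e3" for v
  have lin: "\<And>y. linear (\<lambda>x. g x y)" using S unfolding sym_bilinear_def by auto
  have sy: "\<And>x y. g x y = g y x" using S unfolding sym_bilinear_def by auto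
  have b: "is_basis4 l k e2 e3" and g: "g l l = 0" "g k k = 0" "g l k = -2" "g e2 e2 = 1" "g e3 e3 = 1"
     "g l e2 = 0" "g l e3 = 0" "g k e2 = 0" "g k e3 = 0" "g e2 e3 = 0"
    using sn unfolding semi_null_basis_def by auto
  have lf: "linear f"
  proof (rule linearI)
    fix x y show "f (x + y) = f x + f y"
      unfolding f_def bil(1)[OF S] by (simp add: scaleR_add_left distrib_left)
  next
    fix c x show "f (c *\<^sub>R x) = c *\<^sub>R f x"
      unfolding f_def bil(3)[OF S] by (simp add: scaleR_diff_right)
  qed
  have ge: "g (f v) e3 = - g v e3" for v
    unfolding f_def bil(9)[OF S] bil(3)[OF S] using g(5) by simp
  have ff: "f (f v) = v" for v
    unfolding f_def[of "f v"] ge unfolding f_def by simp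
  have inj: "inj f" by (metis ff injI)
  have surj: "surj f" by (metis ff surjI)
  have fl: "f l = l" using g(7) by (simp add: f_def)
  have fk: "f k = k" using g(9) by (simp add: f_def)
  have fe2: "f e2 = e2" using g(10) by (simp add: f_def)
  have fe3: "f e3 = - e3" using g(5) by (simp add: f_def scaleR_2)
  have img: "f ` {l, k, e2, e3} = {l, k, e2, - e3}"
    by (simp add: fl fk fe2 fe3)
  have ij: "inj_on f A" for A using inj inj_on_subset subset_UNIV by blast
  have "card {l, k, e2, - e3} = 4"
    using b card_image[OF ij[of "{l, k, e2, e3}"]] img unfolding is_basis4_def by simp
  moreover have "independent {l, k, e2, - e3}"
    using b linear_independent_injective_image[OF lf _ ij] img unfolding is_basis4_def by metis
  moreover have "span {l, k, e2, - e3} = UNIV"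
    using b img linear_span_image[OF lf, of "{l, k, e2, e3}"] surj unfolding is_basis4_def by simp
  ultimately show ?thesis
    using g b unfolding semi_null_basis_def is_basis4_def by (simp add: bil(6)[OF S] bil(5)[OF S])
qed

theorem lemma3p1:
  fixes g :: "'v::real_vector \<Rightarrow> 'v \<Rightarrow> real" and F :: "'v \<Rightarrow> 'v"
    and \<sigma> \<tau> :: real and l k e2 e3 :: 'v
  assumes "lorentzian4 g"
    and "skew g F"
    and "semi_null_basis g l k e2 e3"
    and "F k = (-2) *\<^sub>R e2"
    and "F e2 = - l + (\<sigma>/4) *\<^sub>R k"
    and "g (F l) (F l) = (\<sigma>^2 + \<tau>^2) / 4"
  shows "(normal_form g F \<sigma> \<tau> l k e2 e3 \<or> normal_form g F \<sigma> \<tau> l k e2 (- e3))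
    \<and> (\<tau> = 0 \<longrightarrow> normal_form g F \<sigma> \<tau> l k e2 e3 \<and> normal_form g F \<sigma> \<tau> l k e2 (- e3))"
proof -
  have S: "sym_bilinear g" using assms(1) unfolding lorentzian4_def by auto
  have sy: "\<And>x y. g x y = g y x" using S unfolding sym_bilinear_def by auto
  have sk: "\<And>e e'. g e (F e') = - g (F e) e'" and lF: "linear F"
    using assms(2) unfolding skew_def by auto
  have sn: "semi_null_basis g l k e2 e3" by fact
  have sn': "semi_null_basis g l k e2 (- e3)" by (rule flip_basis[OF S sn])
  have sp: "span {l, k, e2, e3} = UNIV" and g: "g l l = 0" "g k k = 0" "g l k = -2" "g e2 e2 = 1" "g e3 e3 = 1"
     "g l e2 = 0" "g l e3 = 0" "g k e2 = 0" "g k e3 = 0" "g e2 e3 = 0"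
    using sn unfolding semi_null_basis_def is_basis4_def by auto
  have g2: "g k l = -2" "g e2 l = 0" "g e3 l = 0" "g e2 k = 0" "g e3 k = 0" "g e3 e2 = 0"
    using g sy by metis+
  have ex: "g (p *\<^sub>R x1 + q *\<^sub>R x2 + r *\<^sub>R x3 + t *\<^sub>R x4) z
      = p * g x1 z + q * g x2 z + r * g x3 z + t * g x4 z" for p q r t x1 x2 x3 x4 z
    by (simp only: bil(1,3)[OF S])
  have ex2: "g z (p *\<^sub>R x1 + q *\<^sub>R x2 + r *\<^sub>R x3 + t *\<^sub>R x4)
      = p * g z x1 + q * g z x2 + r * g z x3 + t * g z x4" for p q r t x1 x2 x3 x4 z
    by (simp only: bil(2,4)[OF S])
  obtain a b c d where Fl: "F l = a *\<^sub>R l + b *\<^sub>R k + c *\<^sub>R e2 + d *\<^sub>R e3"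
    using coords[OF sp] by blast
  obtain a' b' c' d' where Fe3: "F e3 = a' *\<^sub>R l + b' *\<^sub>R k + c' *\<^sub>R e2 + d' *\<^sub>R e3"
    using coords[OF sp] by blast
  have self: "g (F x) x = 0" for x using sk[of x x] sy[of x "F x"] by linarith
  have "g (F l) l = 0" by (rule self)
  then have hb: "b = 0" unfolding Fl ex using g g2 by simp
  have "g (F l) k = - g l (F k)" using sk[of l k] sy[of "F l" k] by linarith
  also have "g l (F k) = 0" unfolding assms(4) bil(4)[OF S] using g by simp
  finally have ha: "a = 0" unfolding Fl ex using g g2 by simp
  have "g (F l) e2 = - g l (F e2)" using sk[of l e2] sy[of "F l" e2] by linarith
  also have "g l (F e2) = - \<sigma>/2" unfolding assms(5) bil(2,4,6)[OF S] using g by simp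
  finally have hc: "c = \<sigma>/2" unfolding Fl ex using g g2 by simp
  have "g (F l) (F l) = c * c + d * d"
    unfolding ex Fl ex2 using g g2 ha hb by simp
  then have "d^2 = (\<tau>/2)^2" using assms(6) hc by (simp add: power2_eq_square field_simps)
  then have hd: "d = \<tau>/2 \<or> d = - (\<tau>/2)"
    using power2_eq_iff by blast
  have "g (F e3) l = - g e3 (F l)" using sk[of e3 l] sy[of "F e3" l] by linarith
  also have "g e3 (F l) = d" unfolding Fl ex2 using g g2 by simp
  finally have hb': "b' = d/2" unfolding Fe3 ex using g g2 by simp
  have "g (F e3) k = - g e3 (F k)" using sk[of e3 k] sy[of "F e3" k] by linarith
  also have "g e3 (F k) = 0" unfolding assms(4) bil(4)[OF S] using g2 by simp
  finally have ha': "a' = 0" unfolding Fe3 ex using g g2 by simp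
  have "g (F e3) e2 = - g e3 (F e2)" using sk[of e3 e2] sy[of "F e3" e2] by linarith
  also have "g e3 (F e2) = 0" unfolding assms(5) bil(2,4,6)[OF S] using g2 by simp
  finally have hc': "c' = 0" unfolding Fe3 ex using g g2 by simp
  have "g (F e3) e3 = 0" by (rule self)
  then have hd': "d' = 0" unfolding Fe3 ex using g g2 by simp
  have Fm: "F (- e3) = - F e3" using lF by (simp add: linear_neg)
  have n1: "d = \<tau>/2 \<Longrightarrow> normal_form g F \<sigma> \<tau> l k e2 e3"
    unfolding normal_form_def using sn Fl Fe3 ha hb hc ha' hb' hc' hd' assms(4,5) by simp
  have n2: "d = - (\<tau>/2) \<Longrightarrow> normal_form g F \<sigma> \<tau> l k e2 (- e3)"
    unfolding normal_form_def using sn' Fl Fe3 Fm ha hb hc ha' hb' hc' hd' assms(4,5) by simp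
  show ?thesis using n1 n2 hd by auto
qed

end
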